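(* Let $\mathcal{C}$ be a category (no limits or colimits are assumed to exist). For every internal groupoid $(C_0,C_1,C_2,d,c,e,m,\pi_1,\pi_2,i)$ in $\mathcal{C}$, define $\theta=\langle i\pi_1,m\rangle\colon C_2\to C_2$ and $\varphi=\langle m,i\pi_2\rangle\colon C_2\to C_2$. Then $(\theta,\varphi,m\colon C_2\to C_1)$ is an involutive-2-link, and it satisfies $m\varphi=\pi_1$, $m\theta=\pi_2$, $\pi_1\varphi=m$, $\pi_1\theta=i\pi_1$, $\pi_2\varphi=i\pi_2$, $\pi_2\theta=m$. Moreover, the assignment sending such an internal groupoid to $(\theta,\varphi,m)$ and an internal functor $(f_0,f_1,f_2)$ to $f_1$ is a well-defined functor from the category of internal groupoids in $\mathcal{C}$ to the category of involutive-2-links in $\mathcal{C}$, and this functor is fully faithful.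
   Context: Notation: for morphisms $x,y\colon X\to C_1$ with $dx=cy$, $\langle x,y\rangle\colon X\to C_2$ denotes the unique morphism with $\pi_1\langle x,y\rangle=x$, $\pi_2\langle x,y\rangle=y$ (using the pullback below). Internal groupoid in a category $\mathcal{C}$: objects $C_0,C_1,C_2$ and morphisms $d,c\colon C_1\to C_0$, $e\colon C_0\to C_1$, $m,\pi_1,\pi_2\colon C_2\to C_1$, $i\colon C_1\to C_1$ such that: $de=1_{C_0}=ce$; $dm=d\pi_2$, $cm=c\pi_1$, $d\pi_1=c\pi_2$; $di=c$, $ci=d$, $i^2=1_{C_1}$, $ie=e$; the commutative square $d\pi_1=c\pi_2$ is a pullback square; $m\langle 1_{C_1},ed\rangle=1_{C_1}=m\langle ec,1_{C_1}\rangle$; $m\langle 1_{C_1},i\rangle=ec$ and $m\langle i,1_{C_1}\rangle=ed$; the cospan $d\pi_2\colon C_2\to C_0$, $c\colon C_1\to C_0$ can be completed to a pullback square $d\pi_2 p_1=c\,p_2$ with $p_1\colon C_3\to C_2$, $p_2\colon C_3\to C_1$; and $m(1\times m)=m(m\times 1)$, where $m\times 1=\langle mp_1,p_2\rangle\colon C_3\to C_2$ and $1\times m=\langle \pi_1p_1, m\langle\pi_2p_1,p_2\rangle\rangle\colon C_3\to C_2$. A morphism of internal groupoids (internal functor) is a triple $(f_0\colon C_0\to C_0',f_1\colon C_1\to C_1',f_2\colon C_2\to C_2')$ commuting with all the structure morphisms $d,c,e,m,\pi_1,\pi_2$ (and hence $i$). Involutive-2-link in $\mathcal{C}$: a triple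 $(\theta,\varphi,m)$ where $m\colon A\to B$ is a morphism and $\theta,\varphi\colon A\to A$ satisfy $\theta^2=\varphi^2=1_A$ and $\theta\varphi\theta=\varphi\theta\varphi$, and such that the three parallel morphisms $m,m\theta,m\varphi\colon A\to B$ are jointly monomorphic. A morphism from $(\theta,\varphi,m\colon A\to B)$ to $(\theta',\varphi',m'\colon A'\to B')$ is a morphism $f\colon B\to B'$ for which there exists $\bar f\colon A\to A'$ with $m'\bar f=fm$, $\theta'\bar f=\bar f\theta$, $\varphi'\bar f=\bar f\varphi$ (such $\bar f$ is then unique); composition is composition of the $f$'s. *)

theory Defs
  imports Main
begin

text \<open>A category: objects, morphisms, domain, codomain, identities and composition.
  Comp C g f is the composite "g after f" (defined when Cod f = Dom g).\<close>

record ('o, 'm) category =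
  Obj  :: "'o set"
  Mor  :: "'m set"
  Dom  :: "'m \<Rightarrow> 'o"
  Cod  :: "'m \<Rightarrow> 'o"
  Id   :: "'o \<Rightarrow> 'm"
  Comp :: "'m \<Rightarrow> 'm \<Rightarrow> 'm"

definition hom :: "('o, 'm) category \<Rightarrow> 'm \<Rightarrow> 'o \<Rightarrow> 'o \<Rightarrow> bool" where
  "hom C f a b \<longleftrightarrow> f \<in> Mor C \<and> Dom C f = a \<and> Cod C f = b"

definition is_category :: "('o, 'm) category \<Rightarrow> bool" where
  "is_category C \<longleftrightarrow>
     (\<forall>f \<in> Mor C. Dom C f \<in> Obj C \<and> Cod C f \<in> Obj C) \<and>
     (\<forall>a \<in> Obj C. hom C (Id C a) a a) \<and>
     (\<forall>f g. f \<in> Mor C \<longrightarrow> g \<in> Mor C \<longrightarrow> Cod C f = Dom C g \<longrightarrow>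
        hom C (Comp C g f) (Dom C f) (Cod C g)) \<and>
     (\<forall>f \<in> Mor C. Comp C f (Id C (Dom C f)) = f \<and> Comp C (Id C (Cod C f)) f = f) \<and>
     (\<forall>f g h. f \<in> Mor C \<longrightarrow> g \<in> Mor C \<longrightarrow> h \<in> Mor C \<longrightarrow>
        Cod C f = Dom C g \<longrightarrow> Cod C g = Dom C h \<longrightarrow>
        Comp C h (Comp C g f) = Comp C (Comp C h g) f)"

definition is_pullback :: "('o, 'm) category \<Rightarrow> 'o \<Rightarrow> 'm \<Rightarrow> 'm \<Rightarrow> 'm \<Rightarrow> 'm \<Rightarrow> bool" where
  "is_pullback C P p1 p2 f g \<longleftrightarrow>
     P \<in> Obj C \<and>
     hom C p1 P (Dom C f) \<and> hom C p2 P (Dom C g) \<and>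
     f \<in> Mor C \<and> g \<in> Mor C \<and> Cod C f = Cod C g \<and>
     Comp C f p1 = Comp C g p2 \<and>
     (\<forall>Q q1 q2. Q \<in> Obj C \<longrightarrow> hom C q1 Q (Dom C f) \<longrightarrow> hom C q2 Q (Dom C g) \<longrightarrow>
        Comp C f q1 = Comp C g q2 \<longrightarrow>
        (\<exists>!u. hom C u Q P \<and> Comp C p1 u = q1 \<and> Comp C p2 u = q2))"

definition pair :: "('o, 'm) category \<Rightarrow> 'o \<Rightarrow> 'm \<Rightarrow> 'm \<Rightarrow> 'm \<Rightarrow> 'm \<Rightarrow> 'm" where
  "pair C P p1 p2 x y =
     (THE u. hom C u (Dom C x) P \<and> Comp C p1 u = x \<and> Comp C p2 u = y)"

record ('o, 'm) igroupoid =
  gC0 :: 'o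
  gC1 :: 'o
  gC2 :: 'o
  gd  :: 'm
  gc  :: 'm
  ge  :: 'm
  gm  :: 'm
  gp1 :: 'm
  gp2 :: 'm
  gi  :: 'm

definition gpair :: "('o, 'm) category \<Rightarrow> ('o, 'm) igroupoid \<Rightarrow> 'm \<Rightarrow> 'm \<Rightarrow> 'm" where
  "gpair C G x y = pair C (gC2 G) (gp1 G) (gp2 G) x y"

definition internal_groupoid :: "('o, 'm) category \<Rightarrow> ('o, 'm) igroupoid \<Rightarrow> bool" where
  "internal_groupoid C G \<longleftrightarrow>
     (let C0 = gC0 G; C1 = gC1 G; C2 = gC2 G; d = gd G; c = gc G; e = ge G;
          m = gm G; p1 = gp1 G; p2 = gp2 G; i = gi G; comp = Comp C;
          pr = gpair C G in
     C0 \<in> Obj C \<and> C1 \<in> Obj C \<and> C2 \<in> Obj C \<and>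
     hom C d C1 C0 \<and> hom C c C1 C0 \<and> hom C e C0 C1 \<and>
     hom C m C2 C1 \<and> hom C p1 C2 C1 \<and> hom C p2 C2 C1 \<and> hom C i C1 C1 \<and>
     comp d e = Id C C0 \<and> comp c e = Id C C0 \<and>
     comp d m = comp d p2 \<and> comp c m = comp c p1 \<and> comp d p1 = comp c p2 \<and>
     comp d i = c \<and> comp c i = d \<and> comp i i = Id C C1 \<and> comp i e = e \<and>
     is_pullback C C2 p1 p2 d c \<and>
     comp m (pr (Id C C1) (comp e d)) = Id C C1 \<and>
     comp m (pr (comp e c) (Id C C1)) = Id C C1 \<and>
     comp m (pr (Id C C1) i) = comp e c \<and>
     comp m (pr i (Id C C1)) = comp e d \<and>
     (\<exists>C3 q1 q2. is_pullback C C3 q1 q2 (comp d p2) c \<and>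
        comp m (pr (comp p1 q1) (comp m (pr (comp p2 q1) q2)))
          = comp m (pr (comp m q1) q2)))"

definition internal_functor ::
  "('o, 'm) category \<Rightarrow> ('o, 'm) igroupoid \<Rightarrow> ('o, 'm) igroupoid \<Rightarrow> 'm \<times> 'm \<times> 'm \<Rightarrow> bool" where
  "internal_functor C G H f \<longleftrightarrow>
     (case f of (f0, f1, f2) \<Rightarrow>
        hom C f0 (gC0 G) (gC0 H) \<and> hom C f1 (gC1 G) (gC1 H) \<and> hom C f2 (gC2 G) (gC2 H) \<and>
        Comp C (gd H) f1 = Comp C f0 (gd G) \<and>
        Comp C (gc H) f1 = Comp C f0 (gc G) \<and>
        Comp C (ge H) f0 = Comp C f1 (ge G) \<and>
        Comp C (gm H) f2 = Comp C f1 (gm G) \<and>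
        Comp C (gp1 H) f2 = Comp C f1 (gp1 G) \<and>
        Comp C (gp2 H) f2 = Comp C f1 (gp2 G))"

definition ifun_id :: "('o, 'm) category \<Rightarrow> ('o, 'm) igroupoid \<Rightarrow> 'm \<times> 'm \<times> 'm" where
  "ifun_id C G = (Id C (gC0 G), Id C (gC1 G), Id C (gC2 G))"

definition ifun_comp :: "('o, 'm) category \<Rightarrow> 'm \<times> 'm \<times> 'm \<Rightarrow> 'm \<times> 'm \<times> 'm \<Rightarrow> 'm \<times> 'm \<times> 'm" where
  "ifun_comp C g f = (case g of (g0, g1, g2) \<Rightarrow> case f of (f0, f1, f2) \<Rightarrow>
      (Comp C g0 f0, Comp C g1 f1, Comp C g2 f2))"

definition jointly_mono3 :: "('o, 'm) category \<Rightarrow> 'm \<Rightarrow> 'm \<Rightarrow> 'm \<Rightarrow> bool" where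
  "jointly_mono3 C f g h \<longleftrightarrow>
     (\<forall>X u v. X \<in> Obj C \<longrightarrow> hom C u X (Dom C f) \<longrightarrow> hom C v X (Dom C f) \<longrightarrow>
        Comp C f u = Comp C f v \<longrightarrow> Comp C g u = Comp C g v \<longrightarrow> Comp C h u = Comp C h v \<longrightarrow>
        u = v)"

definition involutive_2_link :: "('o, 'm) category \<Rightarrow> 'm \<times> 'm \<times> 'm \<Rightarrow> bool" where
  "involutive_2_link C L \<longleftrightarrow>
     (case L of (\<theta>, \<phi>, m) \<Rightarrow>
        m \<in> Mor C \<and> hom C \<theta> (Dom C m) (Dom C m) \<and> hom C \<phi> (Dom C m) (Dom C m) \<and>
        Comp C \<theta> \<theta> = Id C (Dom C m) \<and> Comp C \<phi> \<phi> = Id C (Dom C m) \<and>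
        Comp C \<theta> (Comp C \<phi> \<theta>) = Comp C \<phi> (Comp C \<theta> \<phi>) \<and>
        jointly_mono3 C m (Comp C m \<theta>) (Comp C m \<phi>))"

definition link_mor :: "('o, 'm) category \<Rightarrow> 'm \<times> 'm \<times> 'm \<Rightarrow> 'm \<times> 'm \<times> 'm \<Rightarrow> 'm \<Rightarrow> bool" where
  "link_mor C L L' f \<longleftrightarrow>
     (case L of (\<theta>, \<phi>, m) \<Rightarrow> case L' of (\<theta>', \<phi>', m') \<Rightarrow>
        hom C f (Cod C m) (Cod C m') \<and>
        (\<exists>fb. hom C fb (Dom C m) (Dom C m') \<and> Comp C m' fb = Comp C f m \<and>
              Comp C \<theta>' fb = Comp C fb \<theta> \<and> Comp C \<phi>' fb = Comp C fb \<phi>))"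

definition link_id :: "('o, 'm) category \<Rightarrow> 'm \<times> 'm \<times> 'm \<Rightarrow> 'm" where
  "link_id C L = (case L of (\<theta>, \<phi>, m) \<Rightarrow> Id C (Cod C m))"

definition gtheta :: "('o, 'm) category \<Rightarrow> ('o, 'm) igroupoid \<Rightarrow> 'm" where
  "gtheta C G = gpair C G (Comp C (gi G) (gp1 G)) (gm G)"

definition gphi :: "('o, 'm) category \<Rightarrow> ('o, 'm) igroupoid \<Rightarrow> 'm" where
  "gphi C G = gpair C G (gm G) (Comp C (gi G) (gp2 G))"

definition link_of :: "('o, 'm) category \<Rightarrow> ('o, 'm) igroupoid \<Rightarrow> 'm \<times> 'm \<times> 'm" where
  "link_of C G = (gtheta C G, gphi C G, gm G)"

definition ifun_map :: "'m \<times> 'm \<times> 'm \<Rightarrow> 'm" where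
  "ifun_map f = fst (snd f)"

end

theory Submission
  imports Defs
begin

locale cat = fixes C :: "('o,'m) category" assumes is_cat: "is_category C"
begin
abbreviation cmp (infixr "\<cdot>" 55) where "g \<cdot> f \<equiv> Comp C g f"

lemma dom_obj: "f \<in> Mor C \<Longrightarrow> Dom C f \<in> Obj C" using is_cat unfolding is_category_def by blast
lemma cod_obj: "f \<in> Mor C \<Longrightarrow> Cod C f \<in> Obj C" using is_cat unfolding is_category_def by blast
lemma id_Mor[simp]: "a \<in> Obj C \<Longrightarrow> Id C a \<in> Mor C" using is_cat unfolding is_category_def hom_def by blast
lemma id_Dom[simp]: "a \<in> Obj C \<Longrightarrow> Dom C (Id C a) = a" using is_cat unfolding is_category_def hom_def by blast
lemma id_Cod[simp]: "a \<in> Obj C \<Longrightarrow> Cod C (Id C a) = a" using is_cat unfolding is_category_def hom_def by blast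
lemma comp_Mor[simp]: "f \<in> Mor C \<Longrightarrow> g \<in> Mor C \<Longrightarrow> Cod C f = Dom C g \<Longrightarrow> g \<cdot> f \<in> Mor C"
  using is_cat unfolding is_category_def hom_def by blast
lemma comp_Dom[simp]: "f \<in> Mor C \<Longrightarrow> g \<in> Mor C \<Longrightarrow> Cod C f = Dom C g \<Longrightarrow> Dom C (g \<cdot> f) = Dom C f"
  using is_cat unfolding is_category_def hom_def by blast
lemma comp_Cod[simp]: "f \<in> Mor C \<Longrightarrow> g \<in> Mor C \<Longrightarrow> Cod C f = Dom C g \<Longrightarrow> Cod C (g \<cdot> f) = Cod C g"
  using is_cat unfolding is_category_def hom_def by blast
lemma id_r[simp]: "f \<in> Mor C \<Longrightarrow> Dom C f = a \<Longrightarrow> f \<cdot> Id C a = f"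
  using is_cat unfolding is_category_def by blast
lemma id_l[simp]: "f \<in> Mor C \<Longrightarrow> Cod C f = a \<Longrightarrow> Id C a \<cdot> f = f"
  using is_cat unfolding is_category_def by blast
lemma assoc[simp]: "f \<in> Mor C \<Longrightarrow> g \<in> Mor C \<Longrightarrow> h \<in> Mor C \<Longrightarrow> Cod C f = Dom C g \<Longrightarrow> Cod C g = Dom C h
   \<Longrightarrow> (h \<cdot> g) \<cdot> f = h \<cdot> (g \<cdot> f)"
  using is_cat unfolding is_category_def by metis

lemma pb_pair:
  assumes pb: "is_pullback C P p q f g" and x: "x \<in> Mor C" "Cod C x = Dom C f"
    and y: "y \<in> Mor C" "Cod C y = Dom C g" "Dom C y = Dom C x" and eq: "f \<cdot> x = g \<cdot> y"
  shows "pair C P p q x y \<in> Mor C \<and> Dom C (pair C P p q x y) = Dom C x \<and> Cod C (pair C P p q x y) = P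
     \<and> p \<cdot> pair C P p q x y = x \<and> q \<cdot> pair C P p q x y = y"
proof -
  have "\<exists>!u. hom C u (Dom C x) P \<and> p \<cdot> u = x \<and> q \<cdot> u = y"
  proof -
    have "\<forall>Q q1 q2. Q \<in> Obj C \<longrightarrow> hom C q1 Q (Dom C f) \<longrightarrow> hom C q2 Q (Dom C g) \<longrightarrow>
        f \<cdot> q1 = g \<cdot> q2 \<longrightarrow> (\<exists>!u. hom C u Q P \<and> p \<cdot> u = q1 \<and> q \<cdot> u = q2)"
      using pb unfolding is_pullback_def by blast
    moreover have "hom C x (Dom C x) (Dom C f)" "hom C y (Dom C x) (Dom C g)" using x y unfolding hom_def by auto
    ultimately show ?thesis using dom_obj[OF x(1)] eq by blast
  qed
  from theI'[OF this] show ?thesis unfolding pair_def hom_def by blast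
qed

lemma pb_uniq:
  assumes pb: "is_pullback C P p q f g" and x: "x \<in> Mor C" "Cod C x = Dom C f"
    and y: "y \<in> Mor C" "Cod C y = Dom C g" "Dom C y = Dom C x" and eq: "f \<cdot> x = g \<cdot> y"
    and u: "u \<in> Mor C" "Dom C u = Dom C x" "Cod C u = P" "p \<cdot> u = x" "q \<cdot> u = y"
  shows "u = pair C P p q x y"
proof -
  have "\<exists>!u. hom C u (Dom C x) P \<and> p \<cdot> u = x \<and> q \<cdot> u = y"
  proof -
    have "\<forall>Q q1 q2. Q \<in> Obj C \<longrightarrow> hom C q1 Q (Dom C f) \<longrightarrow> hom C q2 Q (Dom C g) \<longrightarrow>
        f \<cdot> q1 = g \<cdot> q2 \<longrightarrow> (\<exists>!u. hom C u Q P \<and> p \<cdot> u = q1 \<and> q \<cdot> u = q2)"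
      using pb unfolding is_pullback_def by blast
    moreover have "hom C x (Dom C x) (Dom C f)" "hom C y (Dom C x) (Dom C g)" using x y unfolding hom_def by auto
    ultimately show ?thesis using dom_obj[OF x(1)] eq by blast
  qed
  moreover have "hom C u (Dom C x) P \<and> p \<cdot> u = x \<and> q \<cdot> u = y" using u unfolding hom_def by blast
  ultimately show ?thesis unfolding pair_def by (rule the1_equality[symmetric])
qed

lemma pb_facts: "is_pullback C P p q f g \<Longrightarrow> P \<in> Obj C \<and> p \<in> Mor C \<and> q \<in> Mor C \<and> Dom C p = P \<and> Dom C q = P
  \<and> Cod C p = Dom C f \<and> Cod C q = Dom C g \<and> f \<in> Mor C \<and> g \<in> Mor C \<and> Cod C f = Cod C g \<and> f \<cdot> p = g \<cdot> q"
  unfolding is_pullback_def hom_def by blast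

lemma assoc_eq: "a \<cdot> b = r \<Longrightarrow> a \<in> Mor C \<Longrightarrow> b \<in> Mor C \<Longrightarrow> Cod C b = Dom C a \<Longrightarrow> x \<in> Mor C
  \<Longrightarrow> Cod C x = Dom C b \<Longrightarrow> a \<cdot> (b \<cdot> x) = r \<cdot> x"
  by (metis assoc)

end

locale igrp = cat + fixes G assumes ig: "internal_groupoid C G"
begin
abbreviation "C0 \<equiv> gC0 G"
abbreviation "C1 \<equiv> gC1 G"
abbreviation "C2 \<equiv> gC2 G"
abbreviation "d \<equiv> gd G"
abbreviation "c \<equiv> gc G"
abbreviation "e \<equiv> ge G"
abbreviation "m \<equiv> gm G"
abbreviation "p1 \<equiv> gp1 G"
abbreviation "p2 \<equiv> gp2 G"
abbreviation "i \<equiv> gi G"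
abbreviation "pr x y \<equiv> gpair C G x y"

lemmas F = ig[unfolded internal_groupoid_def Let_def]

lemma objs[simp]: "C0 \<in> Obj C" "C1 \<in> Obj C" "C2 \<in> Obj C" using F by auto
lemma mors[simp]: "d \<in> Mor C" "c \<in> Mor C" "e \<in> Mor C" "m \<in> Mor C" "p1 \<in> Mor C" "p2 \<in> Mor C" "i \<in> Mor C"
  using F unfolding hom_def by auto
lemma doms[simp]: "Dom C d = C1" "Dom C c = C1" "Dom C e = C0" "Dom C m = C2" "Dom C p1 = C2" "Dom C p2 = C2" "Dom C i = C1"
  using F unfolding hom_def by auto
lemma cods[simp]: "Cod C d = C0" "Cod C c = C0" "Cod C e = C1" "Cod C m = C1" "Cod C p1 = C1" "Cod C p2 = C1" "Cod C i = C1"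
  using F unfolding hom_def by auto
lemma pb: "is_pullback C C2 p1 p2 d c" using F by blast

lemma de[simp]: "d \<cdot> e = Id C C0" using F by blast
lemma ce[simp]: "c \<cdot> e = Id C C0" using F by blast
lemma dm[simp]: "d \<cdot> m = d \<cdot> p2" using F by blast
lemma cm[simp]: "c \<cdot> m = c \<cdot> p1" using F by blast
lemma dp1[simp]: "d \<cdot> p1 = c \<cdot> p2" using F by blast
lemma di[simp]: "d \<cdot> i = c" using F by blast
lemma ci[simp]: "c \<cdot> i = d" using F by blast
lemma ii[simp]: "i \<cdot> i = Id C C1" using F by blast
lemma ie[simp]: "i \<cdot> e = e" using F by blast
lemma ax_u1: "m \<cdot> pr (Id C C1) (e \<cdot> d) = Id C C1" using F by blast
lemma ax_u2: "m \<cdot> pr (e \<cdot> c) (Id C C1) = Id C C1" using F by blast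
lemma ax_inv1: "m \<cdot> pr (Id C C1) i = e \<cdot> c" using F by blast
lemma ax_inv2: "m \<cdot> pr i (Id C C1) = e \<cdot> d" using F by blast
lemma ax_assoc: "\<exists>C3 q1 q2. is_pullback C C3 q1 q2 (d \<cdot> p2) c \<and>
        m \<cdot> (pr (p1 \<cdot> q1) (m \<cdot> (pr (p2 \<cdot> q1) q2)))
          = m \<cdot> (pr (m \<cdot> q1) q2)" using F by blast

lemma de'[simp]: "x \<in> Mor C \<Longrightarrow> Cod C x = C0 \<Longrightarrow> d \<cdot> (e \<cdot> x) = x" by (subst assoc_eq[OF de]) auto
lemma ce'[simp]: "x \<in> Mor C \<Longrightarrow> Cod C x = C0 \<Longrightarrow> c \<cdot> (e \<cdot> x) = x" by (subst assoc_eq[OF ce]) auto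
lemma dm'[simp]: "x \<in> Mor C \<Longrightarrow> Cod C x = C2 \<Longrightarrow> d \<cdot> (m \<cdot> x) = d \<cdot> (p2 \<cdot> x)" by (subst assoc_eq[OF dm]) auto
lemma cm'[simp]: "x \<in> Mor C \<Longrightarrow> Cod C x = C2 \<Longrightarrow> c \<cdot> (m \<cdot> x) = c \<cdot> (p1 \<cdot> x)" by (subst assoc_eq[OF cm]) auto
lemma dp1'[simp]: "x \<in> Mor C \<Longrightarrow> Cod C x = C2 \<Longrightarrow> d \<cdot> (p1 \<cdot> x) = c \<cdot> (p2 \<cdot> x)" by (subst assoc_eq[OF dp1]) auto
lemma di'[simp]: "x \<in> Mor C \<Longrightarrow> Cod C x = C1 \<Longrightarrow> d \<cdot> (i \<cdot> x) = c \<cdot> x" by (subst assoc_eq[OF di]) auto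
lemma ci'[simp]: "x \<in> Mor C \<Longrightarrow> Cod C x = C1 \<Longrightarrow> c \<cdot> (i \<cdot> x) = d \<cdot> x" by (subst assoc_eq[OF ci]) auto
lemma ii'[simp]: "x \<in> Mor C \<Longrightarrow> Cod C x = C1 \<Longrightarrow> i \<cdot> (i \<cdot> x) = x" by (subst assoc_eq[OF ii]) auto
lemma ie'[simp]: "x \<in> Mor C \<Longrightarrow> Cod C x = C0 \<Longrightarrow> i \<cdot> (e \<cdot> x) = e \<cdot> x" by (subst assoc_eq[OF ie]) auto

lemma pr_all:
  assumes "x \<in> Mor C" "Cod C x = C1" "y \<in> Mor C" "Cod C y = C1" "Dom C y = Dom C x" "d \<cdot> x = c \<cdot> y"
  shows "pr x y \<in> Mor C \<and> Dom C (pr x y) = Dom C x \<and> Cod C (pr x y) = C2 \<and> p1 \<cdot> pr x y = x \<and> p2 \<cdot> pr x y = y"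
  unfolding gpair_def by (rule pb_pair[OF pb]) (use assms in auto)

lemma pr_Mor[simp]: "x \<in> Mor C \<Longrightarrow> Cod C x = C1 \<Longrightarrow> y \<in> Mor C \<Longrightarrow> Cod C y = C1 \<Longrightarrow> Dom C y = Dom C x \<Longrightarrow> d \<cdot> x = c \<cdot> y
  \<Longrightarrow> pr x y \<in> Mor C" using pr_all by blast
lemma pr_Dom[simp]: "x \<in> Mor C \<Longrightarrow> Cod C x = C1 \<Longrightarrow> y \<in> Mor C \<Longrightarrow> Cod C y = C1 \<Longrightarrow> Dom C y = Dom C x \<Longrightarrow> d \<cdot> x = c \<cdot> y
  \<Longrightarrow> Dom C (pr x y) = Dom C x" using pr_all by blast
lemma pr_Cod[simp]: "x \<in> Mor C \<Longrightarrow> Cod C x = C1 \<Longrightarrow> y \<in> Mor C \<Longrightarrow> Cod C y = C1 \<Longrightarrow> Dom C y = Dom C x \<Longrightarrow> d \<cdot> x = c \<cdot> y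
  \<Longrightarrow> Cod C (pr x y) = C2" using pr_all by blast
lemma pr_p1[simp]: "x \<in> Mor C \<Longrightarrow> Cod C x = C1 \<Longrightarrow> y \<in> Mor C \<Longrightarrow> Cod C y = C1 \<Longrightarrow> Dom C y = Dom C x \<Longrightarrow> d \<cdot> x = c \<cdot> y
  \<Longrightarrow> p1 \<cdot> pr x y = x" using pr_all by blast
lemma pr_p2[simp]: "x \<in> Mor C \<Longrightarrow> Cod C x = C1 \<Longrightarrow> y \<in> Mor C \<Longrightarrow> Cod C y = C1 \<Longrightarrow> Dom C y = Dom C x \<Longrightarrow> d \<cdot> x = c \<cdot> y
  \<Longrightarrow> p2 \<cdot> pr x y = y" using pr_all by blast

lemma pr_uniq:
  assumes "u \<in> Mor C" "Cod C u = C2"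
  shows "u = pr (p1 \<cdot> u) (p2 \<cdot> u)"
  unfolding gpair_def by (rule pb_uniq[OF pb]) (use assms in auto)

lemma pr_ext:
  assumes "u \<in> Mor C" "Cod C u = C2" "v \<in> Mor C" "Cod C v = C2" "Dom C u = Dom C v"
    "p1 \<cdot> u = p1 \<cdot> v" "p2 \<cdot> u = p2 \<cdot> v"
  shows "u = v"
  using pr_uniq[OF assms(1,2)] pr_uniq[OF assms(3,4)] assms(6,7) by simp

lemma pr_id[simp]: "pr p1 p2 = Id C C2"
  by (rule pr_ext) auto

lemma pr_comp[simp]:
  assumes "x \<in> Mor C" "Cod C x = C1" "y \<in> Mor C" "Cod C y = C1" "Dom C y = Dom C x" "d \<cdot> x = c \<cdot> y"
    "z \<in> Mor C" "Cod C z = Dom C x"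
  shows "pr x y \<cdot> z = pr (x \<cdot> z) (y \<cdot> z)"
proof -
  have eq: "d \<cdot> (x \<cdot> z) = c \<cdot> (y \<cdot> z)"
    using assms by (metis assoc cods(1) cods(2) doms(1) doms(2) mors(1) mors(2))
  show ?thesis
  proof (rule pr_ext)
  show "p1 \<cdot> (pr x y \<cdot> z) = p1 \<cdot> pr (x \<cdot> z) (y \<cdot> z)" "p2 \<cdot> (pr x y \<cdot> z) = p2 \<cdot> pr (x \<cdot> z) (y \<cdot> z)"
    using assms eq by (simp_all flip: assoc)
  qed (use assms eq in \<open>auto simp del: assoc\<close>)
qed


lemma u1[simp]: assumes "x \<in> Mor C" "Cod C x = C1" "d \<cdot> x = y" shows "m \<cdot> pr x (e \<cdot> y) = x"
proof -
  have "m \<cdot> pr x (e \<cdot> y) = m \<cdot> (pr (Id C C1) (e \<cdot> d) \<cdot> x)" using assms by simp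
  also have "\<dots> = (m \<cdot> pr (Id C C1) (e \<cdot> d)) \<cdot> x" by (rule assoc[symmetric]) (use assms in simp_all)
  also have "\<dots> = x" using assms by (simp add: ax_u1)
  finally show ?thesis .
qed

lemma u2[simp]: assumes "x \<in> Mor C" "Cod C x = C1" "c \<cdot> x = y" shows "m \<cdot> pr (e \<cdot> y) x = x"
proof -
  have "m \<cdot> pr (e \<cdot> y) x = m \<cdot> (pr (e \<cdot> c) (Id C C1) \<cdot> x)" using assms by simp
  also have "\<dots> = (m \<cdot> pr (e \<cdot> c) (Id C C1)) \<cdot> x" by (rule assoc[symmetric]) (use assms in simp_all)
  also have "\<dots> = x" using assms by (simp add: ax_u2)
  finally show ?thesis .
qed

lemma inv1[simp]: assumes "x \<in> Mor C" "Cod C x = C1" shows "m \<cdot> pr x (i \<cdot> x) = e \<cdot> (c \<cdot> x)"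
proof -
  have "m \<cdot> pr x (i \<cdot> x) = m \<cdot> (pr (Id C C1) i \<cdot> x)" using assms by simp
  also have "\<dots> = (m \<cdot> pr (Id C C1) i) \<cdot> x" by (rule assoc[symmetric]) (use assms in simp_all)
  also have "\<dots> = e \<cdot> (c \<cdot> x)" using assms by (simp add: ax_inv1)
  finally show ?thesis .
qed

lemma inv2[simp]: assumes "x \<in> Mor C" "Cod C x = C1" shows "m \<cdot> pr (i \<cdot> x) x = e \<cdot> (d \<cdot> x)"
proof -
  have "m \<cdot> pr (i \<cdot> x) x = m \<cdot> (pr i (Id C C1) \<cdot> x)" using assms by simp
  also have "\<dots> = (m \<cdot> pr i (Id C C1)) \<cdot> x" by (rule assoc[symmetric]) (use assms in simp_all)
  also have "\<dots> = e \<cdot> (d \<cdot> x)" using assms by (simp add: ax_inv2)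
  finally show ?thesis .
qed

lemma gen_assoc:
  assumes x: "x \<in> Mor C" "Cod C x = C1" and y: "y \<in> Mor C" "Cod C y = C1" "Dom C y = Dom C x"
    and z: "z \<in> Mor C" "Cod C z = C1" "Dom C z = Dom C x"
    and xy: "d \<cdot> x = c \<cdot> y" and yz: "d \<cdot> y = c \<cdot> z"
  shows "m \<cdot> pr x (m \<cdot> pr y z) = m \<cdot> pr (m \<cdot> pr x y) z"
proof -
  obtain C3 q1 q2 where pb3: "is_pullback C C3 q1 q2 (d \<cdot> p2) c" and
    E: "m \<cdot> (pr (p1 \<cdot> q1) (m \<cdot> (pr (p2 \<cdot> q1) q2))) = m \<cdot> (pr (m \<cdot> q1) q2)"
    using ax_assoc by blast
  have q: "q1 \<in> Mor C" "q2 \<in> Mor C" "Dom C q1 = C3" "Dom C q2 = C3" "Cod C q1 = C2" "Cod C q2 = C1"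
    "d \<cdot> (p2 \<cdot> q1) = c \<cdot> q2"
    using pb_facts[OF pb3] by auto
  let ?t = "pair C C3 q1 q2 (pr x y) z"
  have t: "?t \<in> Mor C" "Dom C ?t = Dom C x" "Cod C ?t = C3" "q1 \<cdot> ?t = pr x y" "q2 \<cdot> ?t = z"
    using pb_pair[OF pb3, of "pr x y" z] x y z xy yz by auto
  have "(m \<cdot> (pr (p1 \<cdot> q1) (m \<cdot> (pr (p2 \<cdot> q1) q2)))) \<cdot> ?t = (m \<cdot> (pr (m \<cdot> q1) q2)) \<cdot> ?t"
    using E by simp
  then show ?thesis using q t x y z xy yz by simp
qed

lemma cancel1:
  assumes x: "x \<in> Mor C" "Cod C x = C1" and y: "y \<in> Mor C" "Cod C y = C1" "Dom C y = Dom C x"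
    and xy: "d \<cdot> x = c \<cdot> y"
  shows "m \<cdot> pr (i \<cdot> x) (m \<cdot> pr x y) = y"
proof -
  have "m \<cdot> pr (i \<cdot> x) (m \<cdot> pr x y) = m \<cdot> pr (m \<cdot> pr (i \<cdot> x) x) y"
    by (rule gen_assoc) (use x y xy in simp_all)
  also have "\<dots> = y" using x y xy by simp
  finally show ?thesis .
qed

lemma cancel2:
  assumes x: "x \<in> Mor C" "Cod C x = C1" and y: "y \<in> Mor C" "Cod C y = C1" "Dom C y = Dom C x"
    and xy: "d \<cdot> x = c \<cdot> y"
  shows "m \<cdot> pr (m \<cdot> pr x y) (i \<cdot> y) = x"
proof -
  have "m \<cdot> pr (m \<cdot> pr x y) (i \<cdot> y) = m \<cdot> pr x (m \<cdot> pr y (i \<cdot> y))"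
    by (rule gen_assoc[symmetric]) (use x y xy in simp_all)
  also have "\<dots> = x" using x y xy by simp
  finally show ?thesis .
qed

abbreviation "th \<equiv> gtheta C G"
abbreviation "ph \<equiv> gphi C G"

lemma th_all: "th \<in> Mor C \<and> Dom C th = C2 \<and> Cod C th = C2 \<and> p1 \<cdot> th = i \<cdot> p1 \<and> p2 \<cdot> th = m"
  unfolding gtheta_def by simp
lemma ph_all: "ph \<in> Mor C \<and> Dom C ph = C2 \<and> Cod C ph = C2 \<and> p1 \<cdot> ph = m \<and> p2 \<cdot> ph = i \<cdot> p2"
  unfolding gphi_def by simp

lemma mth: "m \<cdot> th = p2"
  using cancel1[of p1 p2] unfolding gtheta_def by simp
lemma mph: "m \<cdot> ph = p1"
  using cancel2[of p1 p2] unfolding gphi_def by simp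

lemma thph[simp]: "th \<in> Mor C" "Dom C th = C2" "Cod C th = C2" "p1 \<cdot> th = i \<cdot> p1" "p2 \<cdot> th = m"
   "ph \<in> Mor C" "Dom C ph = C2" "Cod C ph = C2" "p1 \<cdot> ph = m" "p2 \<cdot> ph = i \<cdot> p2" "m \<cdot> th = p2" "m \<cdot> ph = p1"
  using th_all ph_all mth mph by auto

lemma thph'[simp]: 
  "x \<in> Mor C \<Longrightarrow> Cod C x = C2 \<Longrightarrow> p1 \<cdot> (th \<cdot> x) = i \<cdot> (p1 \<cdot> x)"
  "x \<in> Mor C \<Longrightarrow> Cod C x = C2 \<Longrightarrow> p2 \<cdot> (th \<cdot> x) = m \<cdot> x"
  "x \<in> Mor C \<Longrightarrow> Cod C x = C2 \<Longrightarrow> p1 \<cdot> (ph \<cdot> x) = m \<cdot> x"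
  "x \<in> Mor C \<Longrightarrow> Cod C x = C2 \<Longrightarrow> p2 \<cdot> (ph \<cdot> x) = i \<cdot> (p2 \<cdot> x)"
  "x \<in> Mor C \<Longrightarrow> Cod C x = C2 \<Longrightarrow> m \<cdot> (th \<cdot> x) = p2 \<cdot> x"
  "x \<in> Mor C \<Longrightarrow> Cod C x = C2 \<Longrightarrow> m \<cdot> (ph \<cdot> x) = p1 \<cdot> x"
  by (simp_all flip: assoc)

lemma link: "involutive_2_link C (link_of C G)"
proof -
  have "th \<cdot> th = Id C C2" by (rule pr_ext) auto
  moreover have "ph \<cdot> ph = Id C C2" by (rule pr_ext) auto
  moreover have "th \<cdot> (ph \<cdot> th) = ph \<cdot> (th \<cdot> ph)" by (rule pr_ext) auto
  moreover have "jointly_mono3 C m (m \<cdot> th) (m \<cdot> ph)"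
    unfolding jointly_mono3_def hom_def by (auto intro: pr_ext)
  ultimately show ?thesis unfolding involutive_2_link_def link_of_def hom_def by auto
qed


lemma mee[simp]: "m \<cdot> pr e e = e"
  using u1[of e "Id C C0"] by simp

end

locale igrp2 = G: igrp C G + H: igrp C H for C G H
begin

lemma functor_link:
  assumes F: "internal_functor C G H (f0, f1, f2)"
  shows "f1 \<cdot> G.i = H.i \<cdot> f1" "link_mor C (link_of C G) (link_of C H) f1"
proof -
  have f: "f0 \<in> Mor C" "Dom C f0 = G.C0" "Cod C f0 = H.C0"
     "f1 \<in> Mor C" "Dom C f1 = G.C1" "Cod C f1 = H.C1"
     "f2 \<in> Mor C" "Dom C f2 = G.C2" "Cod C f2 = H.C2"
    using F unfolding internal_functor_def hom_def by auto
  have eqs: "H.d \<cdot> f1 = f0 \<cdot> G.d" "H.c \<cdot> f1 = f0 \<cdot> G.c" "H.e \<cdot> f0 = f1 \<cdot> G.e"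
    "H.m \<cdot> f2 = f1 \<cdot> G.m" "H.p1 \<cdot> f2 = f1 \<cdot> G.p1" "H.p2 \<cdot> f2 = f1 \<cdot> G.p2"
    using F unfolding internal_functor_def by auto
  have v1: "\<And>x. x \<in> Mor C \<Longrightarrow> Cod C x = G.C1 \<Longrightarrow> H.d \<cdot> (f1 \<cdot> x) = f0 \<cdot> (G.d \<cdot> x)"
    using G.assoc_eq[OF eqs(1)] f by simp
  have v2: "\<And>x. x \<in> Mor C \<Longrightarrow> Cod C x = G.C1 \<Longrightarrow> H.c \<cdot> (f1 \<cdot> x) = f0 \<cdot> (G.c \<cdot> x)"
    using G.assoc_eq[OF eqs(2)] f by simp
  have v3: "\<And>x. x \<in> Mor C \<Longrightarrow> Cod C x = G.C0 \<Longrightarrow> H.e \<cdot> (f0 \<cdot> x) = f1 \<cdot> (G.e \<cdot> x)"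
    using G.assoc_eq[OF eqs(3)] f by simp
  have v4: "\<And>x. x \<in> Mor C \<Longrightarrow> Cod C x = G.C2 \<Longrightarrow> H.m \<cdot> (f2 \<cdot> x) = f1 \<cdot> (G.m \<cdot> x)"
    using G.assoc_eq[OF eqs(4)] f by simp
  have v5: "\<And>x. x \<in> Mor C \<Longrightarrow> Cod C x = G.C2 \<Longrightarrow> H.p1 \<cdot> (f2 \<cdot> x) = f1 \<cdot> (G.p1 \<cdot> x)"
    using G.assoc_eq[OF eqs(5)] f by simp
  have v6: "\<And>x. x \<in> Mor C \<Longrightarrow> Cod C x = G.C2 \<Longrightarrow> H.p2 \<cdot> (f2 \<cdot> x) = f1 \<cdot> (G.p2 \<cdot> x)"
    using G.assoc_eq[OF eqs(6)] f by simp
  note V = eqs v1 v2 v3 v4 v5 v6 f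
  have P: "H.pr f1 (f1 \<cdot> G.i) = f2 \<cdot> G.pr (Id C G.C1) G.i"
    by (rule H.pr_ext) (simp_all add: V)
  have M: "H.m \<cdot> H.pr f1 (f1 \<cdot> G.i) = H.e \<cdot> (H.c \<cdot> f1)"
    unfolding P by (simp add: V G.ax_inv1)
  have "H.m \<cdot> H.pr (H.i \<cdot> f1) (H.m \<cdot> H.pr f1 (f1 \<cdot> G.i)) = f1 \<cdot> G.i"
    by (rule H.cancel1) (simp_all add: V)
  then show inv: "f1 \<cdot> G.i = H.i \<cdot> f1" unfolding M by (simp add: f)
  have v7: "\<And>x. x \<in> Mor C \<Longrightarrow> Cod C x = G.C1 \<Longrightarrow> H.i \<cdot> (f1 \<cdot> x) = f1 \<cdot> (G.i \<cdot> x)"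
    using G.assoc_eq[OF inv[symmetric]] f by simp
  have "H.th \<cdot> f2 = f2 \<cdot> G.th" by (rule H.pr_ext) (simp_all add: V v7)
  moreover have "H.ph \<cdot> f2 = f2 \<cdot> G.ph" by (rule H.pr_ext) (simp_all add: V v7)
  ultimately show "link_mor C (link_of C G) (link_of C H) f1"
    unfolding link_mor_def link_of_def hom_def using f eqs(4) by auto
qed

lemma faithful:
  assumes F: "internal_functor C G H (f0, f1, f2)" and F': "internal_functor C G H (g0, f1, g2)"
  shows "f0 = g0 \<and> f2 = g2"
proof -
  have f: "f0 \<in> Mor C" "Dom C f0 = G.C0" "Cod C f0 = H.C0"
     "f1 \<in> Mor C" "Dom C f1 = G.C1" "Cod C f1 = H.C1"
     "f2 \<in> Mor C" "Dom C f2 = G.C2" "Cod C f2 = H.C2"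
     "g0 \<in> Mor C" "Dom C g0 = G.C0" "Cod C g0 = H.C0"
     "g2 \<in> Mor C" "Dom C g2 = G.C2" "Cod C g2 = H.C2"
    using F F' unfolding internal_functor_def hom_def by auto
  have eqs: "H.d \<cdot> f1 = f0 \<cdot> G.d" "H.p1 \<cdot> f2 = f1 \<cdot> G.p1" "H.p2 \<cdot> f2 = f1 \<cdot> G.p2"
     "H.d \<cdot> f1 = g0 \<cdot> G.d" "H.p1 \<cdot> g2 = f1 \<cdot> G.p1" "H.p2 \<cdot> g2 = f1 \<cdot> G.p2"
    using F F' unfolding internal_functor_def by auto
  have "H.d \<cdot> (f1 \<cdot> G.e) = f0" using G.assoc_eq[OF eqs(1), of G.e] f by simp
  moreover have "H.d \<cdot> (f1 \<cdot> G.e) = g0" using G.assoc_eq[OF eqs(4), of G.e] f by simp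
  moreover have "f2 = g2" by (rule H.pr_ext) (use f eqs in simp_all)
  ultimately show ?thesis by simp
qed


lemma full:
  assumes L: "link_mor C (link_of C G) (link_of C H) h"
  shows "\<exists>f. internal_functor C G H f \<and> ifun_map f = h"
proof -
  obtain fb where h: "h \<in> Mor C" "Dom C h = G.C1" "Cod C h = H.C1"
    and fb: "fb \<in> Mor C" "Dom C fb = G.C2" "Cod C fb = H.C2"
    and e1: "H.m \<cdot> fb = h \<cdot> G.m" and e2: "H.th \<cdot> fb = fb \<cdot> G.th" and e3: "H.ph \<cdot> fb = fb \<cdot> G.ph"
    using L unfolding link_mor_def link_of_def hom_def by auto
  have w1: "\<And>x. x \<in> Mor C \<Longrightarrow> Cod C x = G.C2 \<Longrightarrow> H.m \<cdot> (fb \<cdot> x) = h \<cdot> (G.m \<cdot> x)"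
    using G.assoc_eq[OF e1] h fb by simp
  have w2: "\<And>x. x \<in> Mor C \<Longrightarrow> Cod C x = G.C2 \<Longrightarrow> H.th \<cdot> (fb \<cdot> x) = fb \<cdot> (G.th \<cdot> x)"
    using G.assoc_eq[OF e2] h fb by simp
  have w3: "\<And>x. x \<in> Mor C \<Longrightarrow> Cod C x = G.C2 \<Longrightarrow> H.ph \<cdot> (fb \<cdot> x) = fb \<cdot> (G.ph \<cdot> x)"
    using G.assoc_eq[OF e3] h fb by simp
  have e4: "H.p1 \<cdot> fb = h \<cdot> G.p1"
  proof -
    have "H.p1 \<cdot> fb = H.m \<cdot> (H.ph \<cdot> fb)" using fb by simp
    also have "\<dots> = H.m \<cdot> (fb \<cdot> G.ph)" by (simp only: e3)
    also have "\<dots> = h \<cdot> G.p1" using w1[of G.ph] by simp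
    finally show ?thesis .
  qed
  have e5: "H.p2 \<cdot> fb = h \<cdot> G.p2"
  proof -
    have "H.p2 \<cdot> fb = H.m \<cdot> (H.th \<cdot> fb)" using fb by simp
    also have "\<dots> = H.m \<cdot> (fb \<cdot> G.th)" by (simp only: e2)
    also have "\<dots> = h \<cdot> G.p2" using w1[of G.th] by simp
    finally show ?thesis .
  qed
  have w4: "\<And>x. x \<in> Mor C \<Longrightarrow> Cod C x = G.C2 \<Longrightarrow> H.p1 \<cdot> (fb \<cdot> x) = h \<cdot> (G.p1 \<cdot> x)"
    using G.assoc_eq[OF e4] h fb by simp
  have w5: "\<And>x. x \<in> Mor C \<Longrightarrow> Cod C x = G.C2 \<Longrightarrow> H.p2 \<cdot> (fb \<cdot> x) = h \<cdot> (G.p2 \<cdot> x)"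
    using G.assoc_eq[OF e5] h fb by simp
  define E2 where "E2 = G.pr G.e G.e"
  have E2: "E2 \<in> Mor C" "Dom C E2 = G.C0" "Cod C E2 = G.C2" "G.p1 \<cdot> E2 = G.e" "G.p2 \<cdot> E2 = G.e"
    unfolding E2_def by simp_all
  have thE: "G.th \<cdot> E2 = E2" by (rule G.pr_ext) (simp_all add: E2, simp add: E2_def)
  have dc: "H.d \<cdot> (h \<cdot> G.e) = H.c \<cdot> (h \<cdot> G.e)"
    using H.dp1'[of "fb \<cdot> E2"] E2 fb h w4 w5 by simp
  have FE: "fb \<cdot> E2 = H.pr (h \<cdot> G.e) (h \<cdot> G.e)"
    by (rule H.pr_ext) (use E2 fb h w4 w5 dc in simp_all)
  have X: "H.th \<cdot> (fb \<cdot> E2) = fb \<cdot> E2" using w2[of E2] E2 thE by simp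
  have "H.p1 \<cdot> (H.th \<cdot> (fb \<cdot> E2)) = H.p1 \<cdot> (fb \<cdot> E2)" by (simp only: X)
  then have I: "H.i \<cdot> (h \<cdot> G.e) = h \<cdot> G.e" using E2 fb h w4 by simp
  have "H.m \<cdot> (fb \<cdot> E2) = h \<cdot> G.e" using w1[of E2] E2 by (simp add: E2_def)
  then have M2: "H.m \<cdot> H.pr (h \<cdot> G.e) (h \<cdot> G.e) = h \<cdot> G.e" unfolding FE .
  have "H.m \<cdot> H.pr (H.i \<cdot> (h \<cdot> G.e)) (h \<cdot> G.e) = H.e \<cdot> (H.d \<cdot> (h \<cdot> G.e))"
    by (rule H.inv2) (use h in simp_all)
  then have K: "H.e \<cdot> (H.d \<cdot> (h \<cdot> G.e)) = h \<cdot> G.e" unfolding I M2 by simp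
  define f0 where "f0 = H.d \<cdot> (h \<cdot> G.e)"
  have f0: "f0 \<in> Mor C" "Dom C f0 = G.C0" "Cod C f0 = H.C0" unfolding f0_def using h by simp_all
  define P where "P = G.pr (Id C G.C1) (G.e \<cdot> G.d)"
  have P: "P \<in> Mor C" "Dom C P = G.C1" "Cod C P = G.C2" "G.m \<cdot> P = Id C G.C1" "G.p2 \<cdot> P = G.e \<cdot> G.d"
    unfolding P_def by (simp_all add: G.ax_u1)
  have "H.m \<cdot> (fb \<cdot> P) = h" using w1[of P] P h by simp
  moreover have "H.d \<cdot> (H.m \<cdot> (fb \<cdot> P)) = H.d \<cdot> (h \<cdot> (G.e \<cdot> G.d))" using P fb w5 by simp
  ultimately have ED: "H.d \<cdot> h = f0 \<cdot> G.d" unfolding f0_def using h by simp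
  define Q where "Q = G.pr (G.e \<cdot> G.c) (Id C G.C1)"
  have Q: "Q \<in> Mor C" "Dom C Q = G.C1" "Cod C Q = G.C2" "G.m \<cdot> Q = Id C G.C1" "G.p1 \<cdot> Q = G.e \<cdot> G.c"
    unfolding Q_def by (simp_all add: G.ax_u2)
  have "H.m \<cdot> (fb \<cdot> Q) = h" using w1[of Q] Q h by simp
  moreover have "H.c \<cdot> (H.m \<cdot> (fb \<cdot> Q)) = H.c \<cdot> (h \<cdot> (G.e \<cdot> G.c))" using Q fb w4 by simp
  moreover have "H.c \<cdot> (h \<cdot> (G.e \<cdot> G.c)) = f0 \<cdot> G.c" unfolding f0_def using h dc by simp
  ultimately have EC: "H.c \<cdot> h = f0 \<cdot> G.c" by simp
  have EE: "H.e \<cdot> f0 = h \<cdot> G.e" unfolding f0_def by (rule K)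
  have "internal_functor C G H (f0, h, fb)"
    unfolding internal_functor_def hom_def using f0 h fb ED EC EE e1 e4 e5 by auto
  then show ?thesis unfolding ifun_map_def by force
qed

end

lemma igrpI: "is_category C \<Longrightarrow> internal_groupoid C G \<Longrightarrow> igrp C G"
  by (simp add: igrp_def igrp_axioms_def cat_def)
lemma igrp2I: "is_category C \<Longrightarrow> internal_groupoid C G \<Longrightarrow> internal_groupoid C H \<Longrightarrow> igrp2 C G H"
  by (simp add: igrp2_def igrpI)

theorem proposition3p1:
  fixes C :: "('o, 'm) category"
  assumes "is_category C"
  shows
   "(\<forall>G. internal_groupoid C G \<longrightarrow>
        involutive_2_link C (link_of C G) \<and>
        Comp C (gm G) (gphi C G) = gp1 G \<and>
        Comp C (gm G) (gtheta C G) = gp2 G \<and>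
        Comp C (gp1 G) (gphi C G) = gm G \<and>
        Comp C (gp1 G) (gtheta C G) = Comp C (gi G) (gp1 G) \<and>
        Comp C (gp2 G) (gphi C G) = Comp C (gi G) (gp2 G) \<and>
        Comp C (gp2 G) (gtheta C G) = gm G)
    \<and> (\<forall>G H f. internal_groupoid C G \<longrightarrow> internal_groupoid C H \<longrightarrow>
          internal_functor C G H f \<longrightarrow>
          link_mor C (link_of C G) (link_of C H) (ifun_map f))
    \<and> (\<forall>G. internal_groupoid C G \<longrightarrow>
          ifun_map (ifun_id C G) = link_id C (link_of C G))
    \<and> (\<forall>G H K f g. internal_groupoid C G \<longrightarrow> internal_groupoid C H \<longrightarrow>
          internal_groupoid C K \<longrightarrow>
          internal_functor C G H f \<longrightarrow> internal_functor C H K g \<longrightarrow>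
          ifun_map (ifun_comp C g f) = Comp C (ifun_map g) (ifun_map f))
    \<and> (\<forall>G H. internal_groupoid C G \<longrightarrow> internal_groupoid C H \<longrightarrow>
          (\<forall>f g. internal_functor C G H f \<longrightarrow> internal_functor C G H g \<longrightarrow>
                 ifun_map f = ifun_map g \<longrightarrow> f = g) \<and>
          (\<forall>h. link_mor C (link_of C G) (link_of C H) h \<longrightarrow>
                 (\<exists>f. internal_functor C G H f \<and> ifun_map f = h)))"
proof (intro conjI allI impI)
  fix G assume g: "internal_groupoid C G"
  interpret igrp C G by (rule igrpI[OF assms g])
  show "involutive_2_link C (link_of C G)" by (rule link)
  show "Comp C (gm G) (gphi C G) = gp1 G" "Comp C (gm G) (gtheta C G) = gp2 G"
    "Comp C (gp1 G) (gphi C G) = gm G" "Comp C (gp1 G) (gtheta C G) = Comp C (gi G) (gp1 G)"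
    "Comp C (gp2 G) (gphi C G) = Comp C (gi G) (gp2 G)" "Comp C (gp2 G) (gtheta C G) = gm G"
    by simp_all
  show "ifun_map (ifun_id C G) = link_id C (link_of C G)"
    unfolding ifun_map_def ifun_id_def link_id_def link_of_def by simp
next
  fix G H f assume g: "internal_groupoid C G" "internal_groupoid C H" "internal_functor C G H f"
  interpret igrp2 C G H by (rule igrp2I[OF assms g(1,2)])
  obtain f0 f1 f2 where "f = (f0, f1, f2)" by (cases f) auto
  then show "link_mor C (link_of C G) (link_of C H) (ifun_map f)"
    using functor_link(2)[of f0 f1 f2] g(3) unfolding ifun_map_def by simp
next
  fix G H K f g
  show "ifun_map (ifun_comp C g f) = Comp C (ifun_map g) (ifun_map f)"
    unfolding ifun_map_def ifun_comp_def by (cases f; cases g) auto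
next
  fix G H f g assume g: "internal_groupoid C G" "internal_groupoid C H"
    and F: "internal_functor C G H f" "internal_functor C G H g" "ifun_map f = ifun_map g"
  interpret igrp2 C G H by (rule igrp2I[OF assms g(1,2)])
  obtain f0 f1 f2 where f: "f = (f0, f1, f2)" by (cases f) auto
  obtain g0 g1 g2 where gg: "g = (g0, g1, g2)" by (cases g) auto
  have "g1 = f1" using F(3) f gg unfolding ifun_map_def by simp
  then show "f = g" using faithful[of f0 f1 f2 g0 g2] F f gg by simp
next
  fix G H h assume g: "internal_groupoid C G" "internal_groupoid C H"
    and L: "link_mor C (link_of C G) (link_of C H) h"
  interpret igrp2 C G H by (rule igrp2I[OF assms g(1,2)])
  show "\<exists>f. internal_functor C G H f \<and> ifun_map f = h" by (rule full[OF L])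
qed

end
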